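(* Let $k\geq 4$ be fixed. Then, as $n\to\infty$, \[ \frac{2n}{k}+O(1) \;\ge\; \mathrm{wsat}_k(n,B_k) \;\ge\; \frac{2n}{k+O(1)}, \] where the $O(1)$ terms denote quantities bounded in absolute value by constants independent of $n$. That is, there are constants $C_1, C_2$ (independent of $n$) such that for all sufficiently large $n$, $\frac{2n}{k+C_2}\le \mathrm{wsat}_k(n,B_k)\le \frac{2n}{k}+C_1$.
   Context: A $k$-uniform hypergraph $H$ has a vertex set $V(H)$ and a set $E(H)$ of $k$-element subsets of $V(H)$ (hyperedges). The bow tie $B_k$ is the $k$-uniform hypergraph with $2k-1$ vertices and two hyperedges sharing exactly one vertex; thus a $k$-uniform hypergraph contains a copy of $B_k$ iff two of its hyperedges intersect in exactly one vertex. A $k$-uniform hypergraph $H$ on $n$ vertices is $B_k$-semi-saturated if for every $k$-subset $e\subseteq V(H)$ with $e\notin E(H)$, adding $e$ creates a new copy of $B_k$ (containing $e$), i.e. there is a hyperedge $f\in E(H)$ with $|e\cap f|=1$; $H$ itself need not be $B_k$-free. The semi-saturation number $\mathrm{wsat}_k(n,B_k)$ is the minimum number of hyperedges of an $n$-vertex $k$-uniform $B_k$-semi-saturated hypergraph. *)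

theory Defs
  imports Complex_Main
begin

definition k_uniform :: "nat \<Rightarrow> 'a set \<Rightarrow> 'a set set \<Rightarrow> bool" where
  "k_uniform k V E \<longleftrightarrow> (\<forall>e\<in>E. e \<subseteq> V \<and> card e = k)"

definition bowtie_semisat :: "nat \<Rightarrow> 'a set \<Rightarrow> 'a set set \<Rightarrow> bool" where
  "bowtie_semisat k V E \<longleftrightarrow> k_uniform k V E \<and>
     (\<forall>e. e \<subseteq> V \<and> card e = k \<and> e \<notin> E \<longrightarrow> (\<exists>f\<in>E. card (e \<inter> f) = 1))"

text \<open>wsat_k(n, B_k): minimum number of edges of such a hypergraph on n vertices
  (vertex set {0..<n}; the set is nonempty since the complete k-uniform hypergraph qualifies).\<close>
definition wsat_bowtie :: "nat \<Rightarrow> nat \<Rightarrow> nat" where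
  "wsat_bowtie k n = (LEAST m. \<exists>E. bowtie_semisat k {..<n} E \<and> card E = m)"

end

theory Submission
  imports Defs "HOL-Combinatorics.Permutations"
begin

definition Wd :: "nat \<Rightarrow> nat \<Rightarrow> nat list set" where
  "Wd k R = {w. length w \<le> R \<and> set w \<subseteq> {..<k} \<and> successively (\<noteq>) w}"

definition sg :: "nat \<Rightarrow> nat \<Rightarrow> nat \<Rightarrow> nat list \<Rightarrow> nat list" where
  "sg k R i w = (if w \<in> Wd k R then (if w \<noteq> [] \<and> hd w = i then tl w
      else if length w < R then i # w else w) else w)"

lemma finite_Wd: "finite (Wd k R)"
proof -
  have "Wd k R \<subseteq> {xs. set xs \<subseteq> {..<k} \<and> length xs \<le> R}" by (auto simp: Wd_def)
  thus ?thesis using finite_lists_length_le[of "{..<k}" R] finite_subset by blast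
qed

lemma Nil_Wd: "[] \<in> Wd k R" by (simp add: Wd_def)

lemma tl_Wd: "w \<in> Wd k R \<Longrightarrow> tl w \<in> Wd k R"
  by (cases w) (auto simp: Wd_def successively_Cons)

lemma Cons_Wd: "w \<in> Wd k R \<Longrightarrow> i < k \<Longrightarrow> length w < R \<Longrightarrow> \<not> (w \<noteq> [] \<and> hd w = i) \<Longrightarrow> i # w \<in> Wd k R"
  by (cases w) (auto simp: Wd_def successively_Cons)

lemma sg_in: "w \<in> Wd k R \<Longrightarrow> i < k \<Longrightarrow> sg k R i w \<in> Wd k R"
  by (auto simp: sg_def tl_Wd Cons_Wd)

lemma sg_tl: "w \<in> Wd k R \<Longrightarrow> w \<noteq> [] \<Longrightarrow> hd w = i \<Longrightarrow> sg k R i w = tl w"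
  by (simp add: sg_def)
lemma sg_Cons: "w \<in> Wd k R \<Longrightarrow> \<not> (w \<noteq> [] \<and> hd w = i) \<Longrightarrow> length w < R \<Longrightarrow> sg k R i w = i # w"
  unfolding sg_def by auto
lemma sg_fix: "\<not> (w \<in> Wd k R \<and> (w \<noteq> [] \<and> hd w = i \<or> length w < R)) \<Longrightarrow> sg k R i w = w"
  unfolding sg_def by auto

lemma sg_invol: assumes "i < k" shows "sg k R i (sg k R i w) = w"
proof (cases "w \<in> Wd k R")
  case False thus ?thesis by (simp add: sg_def)
next
  case True
  show ?thesis
  proof (cases "w \<noteq> [] \<and> hd w = i")
    case c: True
    have t: "tl w \<in> Wd k R" using True tl_Wd by blast
    have l: "length (tl w) < R" using True c by (cases w) (auto simp: Wd_def)
    have h: "\<not> (tl w \<noteq> [] \<and> hd (tl w) = i)"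
      using True c by (cases w; cases "tl w") (auto simp: Wd_def successively_Cons)
    have "sg k R i w = tl w" using True c sg_tl by blast
    moreover have "sg k R i (tl w) = i # tl w" using t l h sg_Cons by blast
    ultimately show ?thesis using c by (cases w) auto
  next
    case c: False
    show ?thesis
    proof (cases "length w < R")
      case l: True
      have "sg k R i w = i # w" using True c l sg_Cons by blast
      moreover have "i # w \<in> Wd k R" using Cons_Wd True assms l c by blast
      ultimately show ?thesis using sg_tl[of "i # w" k R i] by simp
    next
      case False thus ?thesis using True c sg_fix by metis
    qed
  qed
qed

lemma sg_permutes: assumes "i < k" shows "sg k R i permutes Wd k R"
  unfolding permutes_def
proof (intro conjI allI impI)
  fix x assume "x \<notin> Wd k R" thus "sg k R i x = x" by (simp add: sg_def)
next
  fix y show "\<exists>!x. sg k R i x = y"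
    by (metis sg_invol[OF assms])
qed

lemma sg_Nil: "0 < R \<Longrightarrow> sg k R i [] = [i]"
  by (simp add: sg_def Nil_Wd)

definition PP :: "nat \<Rightarrow> nat \<Rightarrow> (nat list \<Rightarrow> nat list) set" where
  "PP k R = {h. h permutes Wd k R}"
definition VV where "VV k R q = PP k R \<times> {..<(q::nat)}"
definition act where "act k R i v = (sg k R i \<circ> fst v, snd v)"
definition ed where "ed k R i v = {v, act k R i v}"
definition XX where "XX k R q = {ed k R i v | i v. i < k \<and> v \<in> VV k R q}"
definition star where "star k R v = (\<lambda>i. ed k R i v) ` {..<k}"

lemma finite_VV: "finite (VV k R q)"
  using finite_permutations[OF finite_Wd] by (simp add: VV_def PP_def)

lemma finite_XX: "finite (XX k R q)"
proof -
  have "XX k R q = (\<lambda>(i,v). ed k R i v) ` ({..<k} \<times> VV k R q)" by (auto simp: XX_def)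
  thus ?thesis using finite_VV by simp
qed

lemma act_VV: "v \<in> VV k R q \<Longrightarrow> i < k \<Longrightarrow> act k R i v \<in> VV k R q"
  by (auto simp: VV_def PP_def act_def intro: permutes_compose sg_permutes)

lemma act_invol: "i < k \<Longrightarrow> act k R i (act k R i v) = v"
  by (cases v) (simp add: act_def o_def sg_invol)

lemma perm_u: assumes "h permutes Wd k R" obtains u where "u \<in> Wd k R" "h u = []"
proof -
  obtain u where u: "h u = []" using permutes_surj[OF assms] by (metis surjD)
  have "u \<in> Wd k R" using permutes_in_image[OF assms, of u] u Nil_Wd by simp
  thus ?thesis using u that by blast
qed

lemma act_ne: assumes "0 < R" "v \<in> VV k R q" "i < k" "j < k" "i \<noteq> j"
  shows "act k R i v \<noteq> act k R j v" "act k R i v \<noteq> v"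
proof -
  obtain u where u: "fst v u = []" using assms(2) by (auto simp: VV_def PP_def elim: perm_u)
  have "fst (act k R i v) u = [i]" "fst (act k R j v) u = [j]"
    using u sg_Nil[OF assms(1)] by (auto simp: act_def)
  thus "act k R i v \<noteq> act k R j v" "act k R i v \<noteq> v" using assms u by auto
qed

lemma act_ne2: assumes "0 < R" "v \<in> VV k R q" "i < k"
  shows "act k R i v \<noteq> v"
proof -
  obtain u where u: "fst v u = []" using assms(2) by (auto simp: VV_def PP_def elim: perm_u)
  have "fst (act k R i v) u = [i]"
    using u sg_Nil[OF assms(1)] by (auto simp: act_def)
  thus ?thesis using u by auto
qed

lemma card_star: assumes "0 < R" "v \<in> VV k R q" shows "card (star k R v) = k"
proof -
  have "inj_on (\<lambda>i. ed k R i v) {..<k}"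
  proof (rule inj_onI)
    fix i j assume "i \<in> {..<k}" "j \<in> {..<k}" "ed k R i v = ed k R j v"
    thus "i = j" using act_ne[OF assms(1,2), of i j] act_ne[OF assms(1,2), of j i]
      by (auto simp: ed_def doubleton_eq_iff)
  qed
  thus ?thesis by (simp add: star_def card_image)
qed

lemma star_sub: "v \<in> VV k R q \<Longrightarrow> star k R v \<subseteq> XX k R q"
  unfolding star_def XX_def by blast

lemma in_star: "x \<in> star k R v \<Longrightarrow> v \<in> x"
  by (auto simp: star_def ed_def)

lemma star_in: assumes "x \<in> XX k R q" "v \<in> x" shows "x \<in> star k R v"
proof -
  obtain i w where x: "x = ed k R i w" "i < k" "w \<in> VV k R q" using assms(1) by (auto simp: XX_def)
  show ?thesis
  proof (cases "v = w")
    case True thus ?thesis using x by (auto simp: star_def)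
  next
    case False
    hence "v = act k R i w" using assms x by (auto simp: ed_def)
    moreover have "act k R i v = w" using calculation act_invol[OF x(2)] by simp
    ultimately have "x = ed k R i v" using x by (auto simp: ed_def)
    thus ?thesis using x by (auto simp: star_def)
  qed
qed

lemma XX_sub: "x \<in> XX k R q \<Longrightarrow> x \<subseteq> VV k R q"
  by (auto simp: XX_def ed_def act_VV)

lemma leaf:
  assumes e: "e \<subseteq> XX k (2*k) q" "e \<noteq> {}" "card e \<le> k"
  shows "\<exists>v\<in>VV k (2*k) q. card (e \<inter> star k (2*k) v) = 1"
proof (rule ccontr)
  define R where "R = 2*k"
  assume H0: "\<not> ?thesis"
  hence H: "\<And>v. v \<in> VV k R q \<Longrightarrow> card (e \<inter> star k R v) \<noteq> 1" unfolding R_def by blast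
  have fe: "finite e" using e(1) finite_XX finite_subset by blast
  have eX: "e \<subseteq> XX k R q" using e(1) R_def by simp
  obtain x0 where x0: "x0 \<in> e" using e(2) by blast
  obtain i0 g where g: "x0 = ed k R i0 g" "i0 < k" "g \<in> VV k R q" using x0 eX by (auto simp: XX_def)
  obtain u where u: "u \<in> Wd k R" "fst g u = []" using g(3) by (auto simp: VV_def PP_def elim: perm_u)
  define psi where "psi v = fst v u" for v :: "(nat list \<Rightarrow> nat list) \<times> nat"
  have psiW: "psi v \<in> Wd k R" if vin: "v \<in> VV k R q" for v
  proof -
    obtain h j where hj: "v = (h, j)" "h permutes Wd k R" using vin by (auto simp: VV_def PP_def)
    show ?thesis using permutes_in_image[OF hj(2)] u(1) hj(1) by (simp add: psi_def)
  qed
  have psi_act: "psi (act k R i v) = sg k R i (psi v)" for i v by (simp add: psi_def act_def)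
  have claim: "\<exists>v \<in> \<Union>e. length (psi v) = l" if "l \<le> R" for l
    using that
  proof (induction l)
    case 0
    have "g \<in> \<Union>e" using x0 g by (auto simp: ed_def)
    thus ?case using u by (auto simp: psi_def)
  next
    case (Suc l)
    then obtain v where v: "v \<in> \<Union>e" "length (psi v) = l" by auto
    obtain x where x: "x \<in> e" "v \<in> x" using v by blast
    have vV: "v \<in> VV k R q" using x eX XX_sub by blast
    have "x \<in> e \<inter> star k R v" using x eX star_in by blast
    moreover have "finite (e \<inter> star k R v)" using fe by simp
    moreover note fin = calculation(2)
    ultimately have "card (e \<inter> star k R v) \<noteq> 0" using H[OF vV] by auto
    hence "\<not> card (e \<inter> star k R v) \<le> Suc 0" using H[OF vV] by linarith
    then obtain x1 x2 where xx: "x1 \<in> e \<inter> star k R v" "x2 \<in> e \<inter> star k R v" "x1 \<noteq> x2"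
      unfolding card_le_Suc0_iff_eq[OF fin] by blast
    obtain i j where ij: "x1 = ed k R i v" "x2 = ed k R j v" "i < k" "j < k" "i \<noteq> j"
      using xx by (auto simp: star_def)
    define w where "w = psi v"
    obtain a where a: "a < k" "ed k R a v \<in> e" "\<not> (w \<noteq> [] \<and> hd w = a)"
    proof (cases "w \<noteq> [] \<and> hd w = i")
      case True thus ?thesis using that[of j] ij xx by auto
    next
      case False thus ?thesis using that[of i] ij xx by auto
    qed
    have "length w < R" using Suc v w_def by simp
    moreover have "w \<in> Wd k R" using psiW[OF vV] w_def by simp
    ultimately have "sg k R a w = a # w" using a(3) sg_Cons by blast
    hence "length (psi (act k R a v)) = Suc l" using psi_act v w_def by simp
    moreover have "act k R a v \<in> \<Union>e" using a by (auto simp: ed_def)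
    ultimately show ?case by blast
  qed
  have fU: "finite (\<Union>e)" using fe eX by (auto simp: XX_def ed_def)
  have "{0..R} \<subseteq> (\<lambda>v. length (psi v)) ` (\<Union>e)" using claim by force
  hence "card {0..R} \<le> card (\<Union>e)"
    by (meson card_image_le card_mono fU finite_imageI order.trans)
  hence c1: "R + 1 \<le> card (\<Union>e)" by simp
  have "card (\<Union>e) \<le> sum card e" by (rule card_Union_le_sum_card)
  also have "\<dots> \<le> of_nat (card e) * 2"
  proof (rule sum_bounded_above)
    fix x assume "x \<in> e"
    then obtain i v where "x = ed k R i v" using eX by (auto simp: XX_def)
    thus "card x \<le> 2" by (simp add: ed_def card_insert_le_m1)
  qed
  finally show False using c1 e(3) R_def by simp
qed

lemma double_count:
  assumes "0 < R"
  shows "k * card (VV k R q) = 2 * card (XX k R q)"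
proof -
  have "(\<Sum>v\<in>VV k R q. card {x\<in>XX k R q. v \<in> x}) = (\<Sum>x\<in>XX k R q. card {v\<in>VV k R q. v \<in> x})"
  proof -
    have "(\<Sum>v\<in>VV k R q. \<Sum>x\<in>{x\<in>XX k R q. v \<in> x}. (1::nat)) = (\<Sum>x\<in>XX k R q. \<Sum>v\<in>{v\<in>VV k R q. v \<in> x}. 1)"
      by (rule sum.swap_restrict[OF finite_VV finite_XX])
    thus ?thesis by simp
  qed
  moreover have "{x\<in>XX k R q. v \<in> x} = star k R v" if "v \<in> VV k R q" for v
    using that star_in in_star star_sub by blast
  moreover have "{v\<in>VV k R q. v \<in> x} = x" if "x \<in> XX k R q" for x
    using that XX_sub by blast
  moreover have "card x = 2" if xin: "x \<in> XX k R q" for x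
  proof -
    obtain i v where "x = ed k R i v" "i < k" "v \<in> VV k R q" using xin by (auto simp: XX_def)
    thus ?thesis using act_ne2[OF assms, of v k q i] by (auto simp: ed_def)
  qed
  ultimately have "card (VV k R q) * k = card (XX k R q) * 2" using card_star[OF assms] by simp
  thus ?thesis by (simp add: mult.commute)
qed

lemma transfer:
  assumes fU: "finite U" and cU: "card U = n" and S: "bowtie_semisat k U E"
  shows "\<exists>E'. bowtie_semisat k {..<n} E' \<and> card E' \<le> card E"
proof -
  obtain phi where b: "bij_betw phi U {..<n}" using finite_same_card_bij[OF fU, of "{..<n}"] cU by auto
  have inj: "inj_on phi U" and im: "phi ` U = {..<n}" using b by (auto simp: bij_betw_def)
  have EU: "\<And>f. f \<in> E \<Longrightarrow> f \<subseteq> U \<and> card f = k" using S by (auto simp: bowtie_semisat_def k_uniform_def)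
  have fE: "finite E" using EU fU by (meson Pow_iff finite_Pow_iff finite_subset subsetI)
  define E' where "E' = (\<lambda>f. phi ` f) ` E"
  have "card E' \<le> card E" unfolding E'_def using fE by (rule card_image_le)
  moreover have "bowtie_semisat k {..<n} E'"
    unfolding bowtie_semisat_def k_uniform_def
  proof (intro conjI ballI allI impI)
    fix f' assume "f' \<in> E'"
    then obtain f where f: "f \<in> E" "f' = phi ` f" by (auto simp: E'_def)
    have "card f' = card f" using f EU inj by (metis card_image inj_on_subset)
    thus "f' \<subseteq> {..<n}" "card f' = k" using f EU im by auto
  next
    fix e' assume a: "e' \<subseteq> {..<n} \<and> card e' = k \<and> e' \<notin> E'"
    define e where "e = U \<inter> phi -` e'"
    have ee: "phi ` e = e'"
    proof
      show "phi ` e \<subseteq> e'" unfolding e_def by auto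
      show "e' \<subseteq> phi ` e"
      proof
        fix x assume "x \<in> e'"
        then obtain y where "y \<in> U" "phi y = x" using a im by (metis imageE lessThan_iff subsetD)
        thus "x \<in> phi ` e" using \<open>x \<in> e'\<close> unfolding e_def by auto
      qed
    qed
    have eU: "e \<subseteq> U" by (simp add: e_def)
    have ce: "card e = k" using a ee card_image inj_on_subset[OF inj eU] by metis
    have "e \<notin> E" using a ee by (auto simp: E'_def)
    then obtain f where f: "f \<in> E" "card (e \<inter> f) = 1" using S eU ce by (auto simp: bowtie_semisat_def)
    have "e' \<inter> phi ` f = phi ` (e \<inter> f)" using inj_on_image_Int[OF inj eU] f EU ee by metis
    moreover have "card (phi ` (e \<inter> f)) = 1" using f card_image inj_on_subset[OF inj] eU
      by (metis inf.coboundedI1)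
    ultimately have "card (e' \<inter> phi ` f) = 1" by simp
    moreover have "phi ` f \<in> E'" using f by (simp add: E'_def)
    ultimately show "\<exists>f'\<in>E'. card (e' \<inter> f') = 1" by blast
  qed
  ultimately show ?thesis by blast
qed

lemma lower:
  assumes S: "bowtie_semisat k {..<n} E" and k: "0 < k"
  shows "n < k * card E + k"
proof (rule ccontr)
  assume "\<not> ?thesis"
  hence nn: "k * card E + k \<le> n" by simp
  have EU: "\<And>f. f \<in> E \<Longrightarrow> f \<subseteq> {..<n} \<and> card f = k" using S by (auto simp: bowtie_semisat_def k_uniform_def)
  have fE: "finite E" using EU by (meson Pow_iff finite_Pow_iff finite_lessThan finite_subset subsetI)
  have "card (\<Union>E) \<le> sum card E" by (rule card_Union_le_sum_card)
  also have "\<dots> = k * card E" using EU by simp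
  finally have cU: "card (\<Union>E) \<le> k * card E" .
  have sub: "\<Union>E \<subseteq> {..<n}" using EU by blast
  have "card ({..<n} - \<Union>E) = n - card (\<Union>E)"
    using sub by (simp add: card_Diff_subset finite_subset)
  hence "k \<le> card ({..<n} - \<Union>E)" using cU nn by linarith
  then obtain e where e: "e \<subseteq> {..<n} - \<Union>E" "card e = k" by (meson obtain_subset_with_card_n)
  have "e \<noteq> {}" using e k by auto
  hence "e \<notin> E" using e by blast
  then obtain f where f: "f \<in> E" "card (e \<inter> f) = 1" using S e by (auto simp: bowtie_semisat_def)
  have "e \<inter> f = {}" using e f by blast
  thus False using f by simp
qed

lemma card_VV: "card (VV k R q) = card (PP k R) * q"
  by (simp add: VV_def card_cartesian_product)

lemma PP_pos: "0 < card (PP k R)"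
proof -
  have "id \<in> PP k R" by (simp add: PP_def permutes_id)
  moreover have "finite (PP k R)" using finite_permutations[OF finite_Wd] by (simp add: PP_def)
  ultimately show ?thesis using card_gt_0_iff by blast
qed

lemma construct:
  assumes k: "4 \<le> k"
  defines "D \<equiv> card (XX k (2*k) 1)"
  shows "0 < D" and "\<exists>E. bowtie_semisat k {..<n} E \<and> real (card E) \<le> 2 * real n / real k + 2 ^ D"
proof -
  define R where "R = 2*k"
  define P where "P = card (PP k R)"
  have R0: "0 < R" using k R_def by simp
  have dc: "k * P * q = 2 * card (XX k R q)" for q
    using double_count[OF R0, of k q] card_VV[of k R q] by (simp add: P_def mult.assoc)
  have DP: "k * P = 2 * D" using dc[of 1] by (simp add: D_def R_def)
  have cX: "card (XX k R q) = D * q" for q using dc[of q] DP by simp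
  have "0 < k * P" using PP_pos[of k R] k P_def by simp
  thus "0 < D" using DP by simp
  define q where "q = n div D"
  define r where "r = n mod D"
  have nqr: "n = D * q + r" by (simp add: q_def r_def)
  have rD: "r < D" using \<open>0 < D\<close> by (simp add: r_def)
  define U :: "(((nat list \<Rightarrow> nat list) \<times> nat) set + nat) set" where
    "U = Inl ` XX k R q \<union> Inr ` {..<r}"
  define E1 :: "(((nat list \<Rightarrow> nat list) \<times> nat) set + nat) set set" where "E1 = (\<lambda>v. Inl ` star k R v) ` VV k R q"
  define E2 :: "(((nat list \<Rightarrow> nat list) \<times> nat) set + nat) set set"
    where "E2 = {e. e \<subseteq> Inr ` {..<r} \<and> card e = k}"
  define E where "E = E1 \<union> E2"
  have fU: "finite U" using finite_XX by (simp add: U_def)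
  have cU: "card U = n"
  proof -
    have "card U = card (Inl ` XX k R q :: (((nat list \<Rightarrow> nat list) \<times> nat) set + nat) set) + card (Inr ` {..<r} :: (((nat list \<Rightarrow> nat list) \<times> nat) set + nat) set)"
      unfolding U_def by (subst card_Un_disjoint) (auto simp: finite_XX)
    also have "\<dots> = D * q + r" by (simp add: card_image cX)
    finally show ?thesis using nqr by simp
  qed
  have S: "bowtie_semisat k U E"
    unfolding bowtie_semisat_def k_uniform_def
  proof (intro conjI ballI allI impI)
    fix f assume "f \<in> E"
    hence "f \<subseteq> U \<and> card f = k"
    proof (unfold E_def, elim UnE)
      assume "f \<in> E1"
      then obtain v where v: "v \<in> VV k R q" "f = Inl ` star k R v" by (auto simp: E1_def)
      show ?thesis using v star_sub[OF v(1)] card_star[OF R0 v(1)]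
        by (auto simp: U_def card_image)
    next
      assume "f \<in> E2"
      thus ?thesis by (auto simp: E2_def U_def)
    qed
    thus "f \<subseteq> U" "card f = k" by auto
  next
    fix e assume a: "e \<subseteq> U \<and> card e = k \<and> e \<notin> E"
    define eL where "eL = Inl -` e"
    show "\<exists>f\<in>E. card (e \<inter> f) = 1"
    proof (cases "eL = {}")
      case True
      have "e \<subseteq> Inr ` {..<r}"
      proof
        fix x assume x: "x \<in> e"
        hence "x \<in> U" using a by blast
        moreover have "x \<notin> Inl ` XX k R q" using x True by (auto simp: eL_def)
        ultimately show "x \<in> Inr ` {..<r}" by (auto simp: U_def)
      qed
      hence "e \<in> E" using a by (simp add: E_def E2_def)
      thus ?thesis using a by simp
    next
      case False
      have fe: "finite e" using a fU finite_subset by blast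
      have "Inl ` eL \<subseteq> e" by (auto simp: eL_def)
      hence "card (Inl ` eL :: (((nat list \<Rightarrow> nat list) \<times> nat) set + nat) set) \<le> card e" by (rule card_mono[OF fe])
      moreover have "card (Inl ` eL :: (((nat list \<Rightarrow> nat list) \<times> nat) set + nat) set) = card eL" by (rule card_image) (simp add: inj_on_def)
      ultimately have ck: "card eL \<le> k" using a by simp
      have eLX: "eL \<subseteq> XX k R q"
      proof
        fix x assume "x \<in> eL"
        hence "Inl x \<in> U" using a by (auto simp: eL_def)
        thus "x \<in> XX k R q" unfolding U_def by blast
      qed
      have "\<exists>v\<in>VV k (2*k) q. card (eL \<inter> star k (2*k) v) = 1"
        using eLX False ck unfolding R_def by (intro leaf) 
      then obtain v where v: "v \<in> VV k R q" "card (eL \<inter> star k R v) = 1"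
        unfolding R_def by blast
      have "e \<inter> Inl ` star k R v = Inl ` (eL \<inter> star k R v)" by (auto simp: eL_def)
      moreover have "card (Inl ` (eL \<inter> star k R v) :: (((nat list \<Rightarrow> nat list) \<times> nat) set + nat) set) = card (eL \<inter> star k R v)"
        by (rule card_image) (simp add: inj_on_def)
      ultimately have "card (e \<inter> Inl ` star k R v) = 1" using v by simp
      moreover have "Inl ` star k R v \<in> E" using v by (simp add: E_def E1_def)
      ultimately show ?thesis by blast
    qed
  qed
  obtain E' where E': "bowtie_semisat k {..<n} E'" "card E' \<le> card E" using transfer[OF fU cU S] by blast
  have "card E1 \<le> card (VV k R q)" unfolding E1_def by (rule card_image_le[OF finite_VV])
  hence c1: "card E1 \<le> P * q" using card_VV[of k R q] P_def by simp
  have "E2 \<subseteq> Pow (Inr ` {..<r})" by (auto simp: E2_def)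
  hence "card E2 \<le> 2 ^ r" using card_mono[of "Pow (Inr ` {..<r})" E2]
    by (simp add: card_Pow card_image)
  also have "(2::nat) ^ r \<le> 2 ^ D" using rD by simp
  finally have c2: "card E2 \<le> 2 ^ D" .
  have "card E \<le> card E1 + card E2" unfolding E_def by (rule card_Un_le)
  hence cE: "card E' \<le> P * q + 2 ^ D" using c1 c2 E'(2) by linarith
  have "k * (P * q) = 2 * (D * q)" using DP by (metis mult.assoc)
  hence "real (k * (P * q)) = real (2 * (D * q))" by (simp only:)
  hence "real k * real (P * q) = 2 * real (D * q)" by simp
  also have "\<dots> \<le> 2 * real n" using nqr by simp
  finally have "real (P * q) \<le> 2 * real n / real k" using k by (simp add: field_simps)
  moreover have "real (card E') \<le> real (P * q) + 2 ^ D" using of_nat_mono[OF cE] by simp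
  ultimately have "real (card E') \<le> 2 * real n / real k + 2 ^ D" by linarith
  thus "\<exists>E. bowtie_semisat k {..<n} E \<and> real (card E) \<le> 2 * real n / real k + 2 ^ D"
    using E'(1) by blast
qed

theorem proposition2p1:
  fixes k :: nat
  assumes "k \<ge> 4"
  shows "\<exists>C1 C2 :: real. real k + C2 > 0 \<and> (\<exists>N. \<forall>n\<ge>N.
           2 * real n / (real k + C2) \<le> real (wsat_bowtie k n) \<and>
           real (wsat_bowtie k n) \<le> 2 * real n / real k + C1)"
proof -
  define D where "D = card (XX k (2*k) 1)"
  have main: "2 * real n / (real k + 2 * real k) \<le> real (wsat_bowtie k n) \<and>
           real (wsat_bowtie k n) \<le> 2 * real n / real k + 2 ^ D" if n: "n \<ge> 3 * k" for n
  proof -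
    obtain E where E: "bowtie_semisat k {..<n} E" "real (card E) \<le> 2 * real n / real k + 2 ^ D"
      using construct(2)[OF assms, of n] D_def by blast
    have ex: "\<exists>m E. bowtie_semisat k {..<n} E \<and> card E = m" using E by blast
    have "wsat_bowtie k n \<le> card E" unfolding wsat_bowtie_def by (rule Least_le) (use E in blast)
    hence up: "real (wsat_bowtie k n) \<le> 2 * real n / real k + 2 ^ D" using E(2) by linarith
    obtain E0 where E0: "bowtie_semisat k {..<n} E0" "card E0 = wsat_bowtie k n"
      using LeastI_ex[OF ex] unfolding wsat_bowtie_def by blast
    have "n < k * wsat_bowtie k n + k" using lower[OF E0(1)] E0(2) assms by simp
    hence "n + 1 \<le> k * wsat_bowtie k n + k" by simp
    hence "real (n + 1) \<le> real (k * wsat_bowtie k n + k)" by (rule of_nat_mono)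
    hence l: "real n + 1 \<le> real k * real (wsat_bowtie k n) + real k" by simp
    have kp: "0 < real k" using assms by simp
    have "real (3 * k) \<le> real n" using n by (rule of_nat_mono)
    hence n3: "3 * real k \<le> real n" by simp
    have "2 * real n / (real k + 2 * real k) = 2 * real n / (3 * real k)" by simp
    also have "\<dots> \<le> real (wsat_bowtie k n)"
    proof -
      have "2 * real n \<le> 3 * (real k * real (wsat_bowtie k n))" using l n3 kp by linarith
      hence "2 * real n \<le> real (wsat_bowtie k n) * (3 * real k)" by (simp add: algebra_simps)
      thus ?thesis using kp by (simp add: divide_le_eq)
    qed
    finally show ?thesis using up by simp
  qed
  show ?thesis
  proof (intro exI conjI)
    show "real k + 2 * real k > 0" using assms by simp
    show "\<forall>n\<ge>3*k. 2 * real n / (real k + 2 * real k) \<le> real (wsat_bowtie k n) \<and>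
           real (wsat_bowtie k n) \<le> 2 * real n / real k + 2 ^ D" using main by blast
  qed
qed

end
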